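(* Let $Q$ be a quiver such that every path of $Q$ belongs to $\mathcal{A}$, i.e. for any two vertices there is at most one path from one to the other. Then every two-sided algebra ideal $I$ of the path algebra $\Bbbk Q$ is a linearized semigroup ideal, i.e. $I$ is the linear span of a set $X$ of paths such that $\alpha\omega\beta\in X$ whenever $\omega\in X$, $\alpha,\beta$ are paths and the concatenation $\alpha\omega\beta$ is defined (non-zero).
   Context: $\Bbbk$ is an algebraically closed field. Paths include trivial paths $\varepsilon_x$ at vertices; the product of two paths in $\Bbbk Q$ is their concatenation when defined and $0$ otherwise; paths form a basis of $\Bbbk Q$. $\mathcal{A}$ is the set of paths $\omega$ such that no other path has the same head and the same tail as $\omega$. (Equivalently, in semigroup language: $I=\Bbbk\hat I/\Bbbk\mathbf{0}$ for a semigroup ideal $\hat I$ of the path semigroup with zero $\mathbf{0}$.) *)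

theory Defs
  imports "HOL-Computational_Algebra.Polynomial"
begin

definition alg_closed :: "'k::field itself \<Rightarrow> bool" where
  "alg_closed _ \<longleftrightarrow> (\<forall>p :: 'k poly. degree p > 0 \<longrightarrow> (\<exists>x. poly p x = 0))"

text \<open>A path is a pair (x, es): a start vertex x and a list of arrows es, traversed
  left to right. The trivial path at x is (x, []).\<close>

type_synonym ('v,'e) path = "'v \<times> 'e list"

definition is_path :: "('e \<Rightarrow> 'v) \<Rightarrow> ('e \<Rightarrow> 'v) \<Rightarrow> ('v,'e) path \<Rightarrow> bool" where
  "is_path src tgt p \<longleftrightarrow>
     (case p of (x, es) \<Rightarrow>
        (es \<noteq> [] \<longrightarrow> src (hd es) = x) \<and>
        (\<forall>i. Suc i < length es \<longrightarrow> tgt (es ! i) = src (es ! Suc i)))"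

definition ptail :: "('v,'e) path \<Rightarrow> 'v" where
  "ptail p = fst p"

definition phead :: "('e \<Rightarrow> 'v) \<Rightarrow> ('v,'e) path \<Rightarrow> 'v" where
  "phead tgt p = (if snd p = [] then fst p else tgt (last (snd p)))"

definition composable :: "('e \<Rightarrow> 'v) \<Rightarrow> ('v,'e) path \<Rightarrow> ('v,'e) path \<Rightarrow> bool" where
  "composable tgt p q \<longleftrightarrow> phead tgt p = ptail q"

definition pconcat :: "('v,'e) path \<Rightarrow> ('v,'e) path \<Rightarrow> ('v,'e) path" where
  "pconcat p q = (fst p, snd p @ snd q)"

definition pathsA :: "('e \<Rightarrow> 'v) \<Rightarrow> ('e \<Rightarrow> 'v) \<Rightarrow> ('v,'e) path set" where
  "pathsA src tgt = {w. is_path src tgt w \<and>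
      (\<forall>q. is_path src tgt q \<and> q \<noteq> w \<longrightarrow>
           \<not> (ptail q = ptail w \<and> phead tgt q = phead tgt w))}"

text \<open>Path algebra kQ: finitely supported coefficient functions on paths
  (paths form a basis); product extends concatenation bilinearly
  (product of paths is 0 when concatenation is undefined).\<close>
definition path_algebra :: "('e \<Rightarrow> 'v) \<Rightarrow> ('e \<Rightarrow> 'v) \<Rightarrow> (('v,'e) path \<Rightarrow> 'k::field) set" where
  "path_algebra src tgt = {f. finite {p. f p \<noteq> 0} \<and> (\<forall>p. f p \<noteq> 0 \<longrightarrow> is_path src tgt p)}"

definition pa_mult :: "('e \<Rightarrow> 'v) \<Rightarrow> (('v,'e) path \<Rightarrow> 'k::field) \<Rightarrow> (('v,'e) path \<Rightarrow> 'k) \<Rightarrow> (('v,'e) path \<Rightarrow> 'k)" where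
  "pa_mult tgt f g = (\<lambda>r. \<Sum>(p,q) \<in> {p. f p \<noteq> 0} \<times> {q. g q \<noteq> 0}.
      (if composable tgt p q \<and> pconcat p q = r then f p * g q else 0))"

definition pa_ideal :: "('e \<Rightarrow> 'v) \<Rightarrow> ('e \<Rightarrow> 'v) \<Rightarrow> (('v,'e) path \<Rightarrow> 'k::field) set \<Rightarrow> bool" where
  "pa_ideal src tgt I \<longleftrightarrow>
     I \<subseteq> path_algebra src tgt \<and> (\<lambda>_. 0) \<in> I \<and>
     (\<forall>f\<in>I. \<forall>g\<in>I. (\<lambda>r. f r + g r) \<in> I) \<and>
     (\<forall>c. \<forall>f\<in>I. (\<lambda>r. c * f r) \<in> I) \<and>
     (\<forall>a\<in>path_algebra src tgt. \<forall>f\<in>I. pa_mult tgt a f \<in> I \<and> pa_mult tgt f a \<in> I)"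

definition pbasis :: "('v,'e) path \<Rightarrow> (('v,'e) path \<Rightarrow> 'k::field)" where
  "pbasis p = (\<lambda>r. if r = p then 1 else 0)"

definition pspan :: "('v,'e) path set \<Rightarrow> (('v,'e) path \<Rightarrow> 'k::field) set" where
  "pspan X = {(\<lambda>r. \<Sum>p\<in>F. c p * pbasis p r) | F c. finite F \<and> F \<subseteq> X}"

definition path_semigroup_ideal :: "('e \<Rightarrow> 'v) \<Rightarrow> ('e \<Rightarrow> 'v) \<Rightarrow> ('v,'e) path set \<Rightarrow> bool" where
  "path_semigroup_ideal src tgt X \<longleftrightarrow>
     X \<subseteq> {p. is_path src tgt p} \<and>
     (\<forall>w\<in>X. \<forall>a b. is_path src tgt a \<and> is_path src tgt b \<and>
        composable tgt a w \<and> composable tgt w b \<longrightarrow> pconcat (pconcat a w) b \<in> X)"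

end

theory Submission
  imports Defs
begin

lemma supp_pbasis: "{p. (pbasis a :: _ \<Rightarrow> 'k::field) p \<noteq> 0} = {a}"
  by (auto simp: pbasis_def)

lemma pbasis_self[simp]: "pbasis p p = 1"
  by (simp add: pbasis_def)

lemma pbasis_mult:
  "pa_mult tgt (pbasis a :: _ \<Rightarrow> 'k::field) (pbasis b) =
     (if composable tgt a b then pbasis (pconcat a b) else (\<lambda>_. 0))"
  unfolding pa_mult_def supp_pbasis by (auto simp: pbasis_def fun_eq_iff)

lemma triv_left:
  assumes "f \<in> path_algebra src tgt"
  shows "pa_mult tgt (pbasis (x,[]) :: _ \<Rightarrow> 'k::field) f = (\<lambda>r. if fst r = x then f r else 0)"
proof
  fix r
  let ?S = "{q. f q \<noteq> 0}"
  have fin: "finite ?S" using assms by (simp add: path_algebra_def)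
  have "pa_mult tgt (pbasis (x,[]) :: _ \<Rightarrow> 'k) f r =
     (\<Sum>(p,q) \<in> Pair (x,[]) ` ?S. (if composable tgt p q \<and> pconcat p q = r then pbasis (x,[]) p * f q else 0))"
    unfolding pa_mult_def supp_pbasis
    by (rule sum.cong[OF _ refl]) auto
  also have "\<dots> = (\<Sum>q\<in>?S. (if composable tgt (x,[]) q \<and> pconcat (x,[]) q = r then f q else 0))"
    apply (subst sum.reindex) apply (simp_all add: inj_on_def) apply (rule sum.cong) apply simp apply simp done
  also have "\<dots> = (\<Sum>q\<in>?S. (if q = r then (if fst r = x then f r else 0) else 0))"
    by (rule sum.cong) (auto simp: composable_def phead_def ptail_def pconcat_def)
  also have "\<dots> = (if fst r = x then f r else 0)"
    using fin by (simp add: sum.delta')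
  finally show "pa_mult tgt (pbasis (x,[]) :: _ \<Rightarrow> 'k) f r = (if fst r = x then f r else 0)" .
qed

lemma triv_right:
  assumes "f \<in> path_algebra src tgt"
  shows "pa_mult tgt f (pbasis (y,[]) :: _ \<Rightarrow> 'k::field) = (\<lambda>r. if phead tgt r = y then f r else 0)"
proof
  fix r
  let ?S = "{q. f q \<noteq> 0}"
  have fin: "finite ?S" using assms by (simp add: path_algebra_def)
  have "pa_mult tgt f (pbasis (y,[]) :: _ \<Rightarrow> 'k) r =
     (\<Sum>(p,q) \<in> (\<lambda>p. (p,(y,[]))) ` ?S. (if composable tgt p q \<and> pconcat p q = r then f p * pbasis (y,[]) q else 0))"
    unfolding pa_mult_def supp_pbasis
    by (rule sum.cong[OF _ refl]) auto
  also have "\<dots> = (\<Sum>q\<in>?S. (if composable tgt q (y,[]) \<and> pconcat q (y,[]) = r then f q else 0))"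
    apply (subst sum.reindex) apply (simp_all add: inj_on_def) apply (rule sum.cong) apply simp apply simp done
  also have "\<dots> = (\<Sum>q\<in>?S. (if q = r then (if phead tgt r = y then f r else 0) else 0))"
    by (rule sum.cong) (auto simp: composable_def phead_def ptail_def pconcat_def)
  also have "\<dots> = (if phead tgt r = y then f r else 0)"
    using fin by (simp add: sum.delta')
  finally show "pa_mult tgt f (pbasis (y,[]) :: _ \<Rightarrow> 'k) r = (if phead tgt r = y then f r else 0)" .
qed

lemma pbasis_in: "is_path src tgt p \<Longrightarrow> (pbasis p :: _ \<Rightarrow> 'k::field) \<in> path_algebra src tgt"
  by (auto simp: path_algebra_def pbasis_def)

lemma triv_path: "is_path src tgt (x,[])"
  by (simp add: is_path_def)

theorem proposition2:
  fixes src tgt :: "'e \<Rightarrow> 'v"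
    and I :: "(('v,'e) path \<Rightarrow> 'k::field) set"
  assumes "alg_closed TYPE('k)"
    and "\<forall>p. is_path src tgt p \<longrightarrow> p \<in> pathsA src tgt"
    and "pa_ideal src tgt I"
  shows "\<exists>X. path_semigroup_ideal src tgt X \<and> I = pspan X"
proof -
  have sub: "I \<subseteq> path_algebra src tgt" and zero: "(\<lambda>_. 0) \<in> I"
    and add: "\<And>f g. f\<in>I \<Longrightarrow> g\<in>I \<Longrightarrow> (\<lambda>r. f r + g r) \<in> I"
    and smul: "\<And>c f. f\<in>I \<Longrightarrow> (\<lambda>r. c * f r) \<in> I"
    and mull: "\<And>a f. a\<in>path_algebra src tgt \<Longrightarrow> f\<in>I \<Longrightarrow> pa_mult tgt a f \<in> I"
    and mulr: "\<And>a f. a\<in>path_algebra src tgt \<Longrightarrow> f\<in>I \<Longrightarrow> pa_mult tgt f a \<in> I"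
    using assms(3) unfolding pa_ideal_def by blast+
  have uniq: "q = p" if "is_path src tgt p" "is_path src tgt q" "ptail q = ptail p"
    "phead tgt q = phead tgt p" for p q
    using assms(2) that unfolding pathsA_def by blast
  define X where "X = {p. (pbasis p :: _ \<Rightarrow> 'k) \<in> I}"
  have Xpath: "is_path src tgt p" if "p \<in> X" for p
  proof -
    have "(pbasis p :: _ \<Rightarrow> 'k) \<in> path_algebra src tgt" using that sub unfolding X_def by blast
    then have "(pbasis p :: _ \<Rightarrow> 'k) p \<noteq> 0 \<longrightarrow> is_path src tgt p" unfolding path_algebra_def by blast
    then show ?thesis by simp
  qed
  have key: "p \<in> X" if f: "f \<in> I" "f p \<noteq> 0" for f p
  proof -
    have fA: "f \<in> path_algebra src tgt" using f sub by blast
    have pp: "is_path src tgt p" using fA f(2) unfolding path_algebra_def by blast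
    define g where "g = pa_mult tgt (pbasis (ptail p, [])) f"
    have gI: "g \<in> I" unfolding g_def by (rule mull[OF pbasis_in[OF triv_path] f(1)])
    have gA: "g \<in> path_algebra src tgt" using gI sub by blast
    define h where "h = pa_mult tgt g (pbasis (phead tgt p, []))"
    have hI: "h \<in> I" unfolding h_def by (rule mulr[OF pbasis_in[OF triv_path] gI])
    have hr: "h r = (if phead tgt r = phead tgt p then (if fst r = ptail p then f r else 0) else 0)" for r
      unfolding h_def triv_right[OF gA] using triv_left[OF fA, of "ptail p"] unfolding g_def by simp
    have "h = (\<lambda>r. f p * pbasis p r)"
    proof
      fix r
      show "h r = f p * pbasis p r"
      proof (cases "f r = 0")
        case True
        then have "h r = 0" unfolding hr by simp
        moreover have "r \<noteq> p \<or> f p = 0" using True by auto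
        ultimately show ?thesis by (auto simp: pbasis_def)
      next
        case False
        then have rp: "is_path src tgt r" using fA unfolding path_algebra_def by blast
        show ?thesis
          unfolding hr
          using uniq[OF pp rp] by (auto simp: pbasis_def ptail_def)
      qed
    qed
    then have "(\<lambda>r. inverse (f p) * h r) = pbasis p"
      using f(2) by (auto simp: fun_eq_iff)
    moreover have "(\<lambda>r. inverse (f p) * h r) \<in> I" by (rule smul[OF hI])
    ultimately show ?thesis unfolding X_def by simp
  qed
  have sumI: "(\<lambda>r. \<Sum>p\<in>F. c p * pbasis p r) \<in> I" if "finite F" "F \<subseteq> X" for F c
    using that
  proof (induction F rule: finite_induct)
    case empty then show ?case using zero by simp
  next
    case (insert a F)
    have "(\<lambda>r. c a * pbasis a r) \<in> I" using insert smul unfolding X_def by blast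
    moreover have "(\<lambda>r. \<Sum>p\<in>F. c p * pbasis p r) \<in> I" using insert by blast
    ultimately have "(\<lambda>r. c a * pbasis a r + (\<Sum>p\<in>F. c p * pbasis p r)) \<in> I" by (rule add)
    then show ?case using insert by simp
  qed
  have "path_semigroup_ideal src tgt X"
    unfolding path_semigroup_ideal_def
  proof (intro conjI ballI allI impI)
    show "X \<subseteq> {p. is_path src tgt p}" using Xpath by blast
  next
    fix w a b assume w: "w \<in> X" and ab: "is_path src tgt a \<and> is_path src tgt b \<and>
        composable tgt a w \<and> composable tgt w b"
    have "pa_mult tgt (pbasis a) (pbasis w :: _ \<Rightarrow> 'k) \<in> I"
      using mull[OF pbasis_in] w ab unfolding X_def by blast
    then have 1: "pbasis (pconcat a w) \<in> (I :: (_ \<Rightarrow> 'k) set)" using ab by (simp add: pbasis_mult)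
    have "pa_mult tgt (pbasis (pconcat a w)) (pbasis b :: _ \<Rightarrow> 'k) \<in> I"
      using mulr[OF _ 1] pbasis_in ab by blast
    moreover have "composable tgt (pconcat a w) b"
      using ab by (auto simp: composable_def pconcat_def phead_def ptail_def split: if_splits)
    ultimately show "pconcat (pconcat a w) b \<in> X" unfolding X_def by (simp add: pbasis_mult)
  qed
  moreover have "I = pspan X"
  proof
    show "pspan X \<subseteq> I" unfolding pspan_def using sumI by blast
  next
    show "I \<subseteq> pspan X"
    proof
      fix f assume fI: "f \<in> I"
      let ?F = "{p. f p \<noteq> 0}"
      have fin: "finite ?F" using fI sub by (auto simp: path_algebra_def)
      have "f = (\<lambda>r. \<Sum>p\<in>?F. f p * pbasis p r)"
      proof
        fix r
        have "(\<Sum>p\<in>?F. f p * pbasis p r) = (\<Sum>p\<in>?F. (if r = p then f r else 0))"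
          by (rule sum.cong) (auto simp: pbasis_def)
        also have "\<dots> = f r" using fin by (simp add: sum.delta)
        finally show "f r = (\<Sum>p\<in>?F. f p * pbasis p r)" by simp
      qed
      moreover have "?F \<subseteq> X" using key fI by blast
      ultimately show "f \<in> pspan X" unfolding pspan_def using fin by blast
    qed
  qed
  ultimately show ?thesis by blast
qed

end
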